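(* For every $m\geq1$ and every $i\in\{1,\dots,N\}$, $$C^{(2m)}_{-i,i}\cdot v=G_i\, C^{(2m-1)}_{ii}\cdot v-\lambda_i\,C^{(2m-1)}_{-i,i}\cdot v.$$
   Context: Let $N\geq1$, $I=\{-N,\dots,-1,1,\dots,N\}$, and for $k\in I$ put $\bar k=0$ if $k>0$, $\bar k=1$ if $k<0$. The Lie superalgebra $\mathfrak{q}(N)$ over $\mathbb{C}$ is spanned by elements $F_{ij}$ ($i,j\in I$) with $F_{-i,-j}=F_{ij}$ (realized as $F_{ij}=E_{ij}+E_{-i,-j}\in\mathfrak{gl}(N|N)$), $F_{ij}$ of parity $\bar\imath+\bar\jmath\bmod 2$, and supercommutator $$[F_{ij}, F_{kl}] = \delta_{kj} F_{il} - (-1)^{(\bar{\imath}+ \bar{\jmath})(\bar{k} + \bar{l})} \delta_{il} F_{kj} + \delta_{k,-j} F_{-i,l} - (-1)^{(\bar{\imath} + \bar{\jmath})(\bar{k} + \bar{l})} \delta_{-i,l} F_{k,-j}.$$ For $n\geq1$ define $C^{(n)}_{ij}\in U(\mathfrak{q}(N))$ by $$C^{(n)}_{ij} = \sum_{k_1,\ldots,k_{n-1}\in I}F_{ik_1} (-1)^{\bar{k}_1} F_{k_1k_2} (-1)^{\bar{k}_2} \cdots F_{k_{n-2}k_{n-1}} (-1)^{\bar{k}_{n-1}} F_{k_{n-1}j}$$ (so $C^{(1)}_{ij}=F_{ij}$). For $i>0$ let $G_i=F_{-i,i}$ $(=F_{i,-i})$. Let $V$ be a representation of $\mathfrak{q}(N)$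 and $v\in V$ a vector such that $F_{ij}\cdot v=0$ whenever $|i|<|j|$, and $F_{ii}\cdot v=\lambda_i v$ for $i=1,\dots,N$, where $\lambda_1,\dots,\lambda_N\in\mathbb{C}$. *)

theory Defs
  imports Complex_Main
begin

definition Idx :: "nat \<Rightarrow> int set" where
  "Idx N = {-int N..-1} \<union> {1..int N}"

definition par :: "int \<Rightarrow> nat" where
  "par k = (if k < 0 then 1 else 0)"

definition psign :: "int \<Rightarrow> complex" where
  "psign k = (-1) ^ par k"

text \<open>A representation of q(N) on a complex module V (scalar multiplication scale):
  operators F i j, i,j in I, which are complex-linear, satisfy F(-i,-j) = F(i,j),
  and satisfy the defining supercommutator relations as operators on V
  (i.e. V is a module over U(q(N))).\<close>
definition is_qrep :: "nat \<Rightarrow> (complex \<Rightarrow> 'v::ab_group_add \<Rightarrow> 'v) \<Rightarrow> (int \<Rightarrow> int \<Rightarrow> 'v \<Rightarrow> 'v) \<Rightarrow> bool" where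
  "is_qrep N scale F \<longleftrightarrow>
     module scale \<and>
     (\<forall>i\<in>Idx N. \<forall>j\<in>Idx N. module_hom scale scale (F i j)) \<and>
     (\<forall>i\<in>Idx N. \<forall>j\<in>Idx N. F (-i) (-j) = F i j) \<and>
     (\<forall>i\<in>Idx N. \<forall>j\<in>Idx N. \<forall>k\<in>Idx N. \<forall>l\<in>Idx N. \<forall>x.
        (let e = ((-1::complex) ^ ((par i + par j) * (par k + par l))) in
          F i j (F k l x) - scale e (F k l (F i j x)) =
            (if k = j then F i l x else 0)
          - scale e (if i = l then F k j x else 0)
          + (if k = -j then F (-i) l x else 0)
          - scale e (if -i = l then F k (-j) x else 0)))"

text \<open>Action of C^(n)_{ij} on V: C^(1)_{ij} = F_{ij} and
  C^(n+1)_{ij} = sum_k F_{ik} (-1)^(bar k) C^(n)_{kj}. (n = 0 is unused.)\<close>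
fun Cop :: "nat \<Rightarrow> (complex \<Rightarrow> 'v::ab_group_add \<Rightarrow> 'v) \<Rightarrow> (int \<Rightarrow> int \<Rightarrow> 'v \<Rightarrow> 'v) \<Rightarrow> nat \<Rightarrow> int \<Rightarrow> int \<Rightarrow> 'v \<Rightarrow> 'v" where
  "Cop N scale F 0 i j x = 0"
| "Cop N scale F (Suc 0) i j x = F i j x"
| "Cop N scale F (Suc (Suc n)) i j x =
     (\<Sum>k\<in>Idx N. F i k (scale (psign k) (Cop N scale F (Suc n) k j x)))"

end

theory Submission imports Defs begin

definition sg :: "int \<Rightarrow> int \<Rightarrow> int \<Rightarrow> int \<Rightarrow> complex" where
  "sg a b c d = (-1::complex) ^ ((par a + par b) * (par c + par d))"

lemma Idx_neg: "k \<in> Idx N \<Longrightarrow> -k \<in> Idx N" by (auto simp: Idx_def)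
lemma Idx_nz: "k \<in> Idx N \<Longrightarrow> k \<noteq> 0" by (auto simp: Idx_def)
lemma Idx_fin: "finite (Idx N)" by (simp add: Idx_def)

lemma sg_mult: "sg a b c k * sg a b k d = sg a b c d"
  by (simp add: sg_def par_def power_add[symmetric] split: if_split)

lemma sg_mult': "sg a b k d * sg a b c k = sg a b c d"
  using sg_mult by (simp add: mult.commute)

lemma sg_mult3: "sg a b c k * (sg a b k d * p) = sg a b c d * p"
   "sg a b k d * (sg a b c k * p) = sg a b c d * p"
   "sg a b c k * (p * sg a b k d) = sg a b c d * p"
   "sg a b k d * (p * sg a b c k) = sg a b c d * p"
  by (simp_all add: mult.assoc[symmetric] sg_mult sg_mult' mult.commute[of _ p])

lemma sg_A1: "sg a b c b * psign b = sg a b c a * psign a"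
  by (simp add: sg_def psign_def par_def power_add[symmetric] split: if_split)
lemma sg_A3: "a \<noteq> 0 \<Longrightarrow> b \<noteq> 0 \<Longrightarrow> sg a b c (-b) * psign (-b) = sg a b c (-a) * psign (-a)"
  by (cases "a < 0"; cases "b < 0"; cases "c < 0"; simp add: sg_def psign_def par_def)

locale Q =
  fixes N :: nat and scale :: "complex \<Rightarrow> 'v::ab_group_add \<Rightarrow> 'v" and F :: "int \<Rightarrow> int \<Rightarrow> 'v \<Rightarrow> 'v"
  assumes rep: "is_qrep N scale F"
begin

abbreviation I where "I \<equiv> Idx N"
abbreviation C where "C \<equiv> Cop N scale F"

lemma M: "module scale" using rep by (simp add: is_qrep_def)
sublocale module scale by (rule M)

lemma Fhom: "a \<in> I \<Longrightarrow> b \<in> I \<Longrightarrow> module_hom scale scale (F a b)"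
  using rep by (simp add: is_qrep_def)

lemma F_add: "a \<in> I \<Longrightarrow> b \<in> I \<Longrightarrow> F a b (x + y) = F a b x + F a b y"
  using Fhom module_hom.add by blast
lemma F_scale: "a \<in> I \<Longrightarrow> b \<in> I \<Longrightarrow> F a b (scale r x) = scale r (F a b x)"
  using Fhom module_hom.scale by blast
lemma F_zero: "a \<in> I \<Longrightarrow> b \<in> I \<Longrightarrow> F a b 0 = 0"
  using Fhom module_hom.zero by blast
lemma F_diff: "a \<in> I \<Longrightarrow> b \<in> I \<Longrightarrow> F a b (x - y) = F a b x - F a b y"
  using Fhom module_hom.diff by blast
lemma F_sum: "a \<in> I \<Longrightarrow> b \<in> I \<Longrightarrow> F a b (sum g A) = (\<Sum>k\<in>A. F a b (g k))"
  using Fhom module_hom.sum by blast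
lemma F_minus: "a \<in> I \<Longrightarrow> b \<in> I \<Longrightarrow> F a b (- x) = - F a b x"
  using Fhom module_hom.neg by blast
lemma F_neg: "a \<in> I \<Longrightarrow> b \<in> I \<Longrightarrow> F (-a) (-b) = F a b"
  using rep by (simp add: is_qrep_def)

lemma R: "a \<in> I \<Longrightarrow> b \<in> I \<Longrightarrow> c \<in> I \<Longrightarrow> d \<in> I \<Longrightarrow>
  F a b (F c d x) - scale (sg a b c d) (F c d (F a b x)) =
    (if c = b then F a d x else 0) - scale (sg a b c d) (if a = d then F c b x else 0)
  + (if c = -b then F (-a) d x else 0) - scale (sg a b c d) (if -a = d then F c (-b) x else 0)"
  using rep unfolding is_qrep_def sg_def Let_def by blast

lemma C_hom: "c \<in> I \<Longrightarrow> d \<in> I \<Longrightarrow> module_hom scale scale (C (Suc n) c d)"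
proof (induction n arbitrary: c)
  case 0
  have "C (Suc 0) c d = F c d" by (rule ext) simp
  then show ?case using Fhom 0 by simp
next
  case (Suc n)
  have h: "\<And>k. k \<in> I \<Longrightarrow> module_hom scale scale (C (Suc n) k d)" using Suc by blast
  show ?case unfolding module_hom_iff
  proof (intro conjI allI)
    show "module scale" by (rule M)
    show "module scale" by (rule M)
    fix x y
    show "C (Suc (Suc n)) c d (x + y) = C (Suc (Suc n)) c d x + C (Suc (Suc n)) c d y"
      using h Suc.prems
      by (simp add: module_hom.add[OF h] F_add scale_right_distrib sum.distrib)
  next
    fix r x
    show "C (Suc (Suc n)) c d (scale r x) = scale r (C (Suc (Suc n)) c d x)"
      using h Suc.prems
      by (simp add: module_hom.scale[OF h] F_scale scale_sum_right scale_left_commute mult.commute)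
  qed
qed


lemma C_hom': "n \<ge> 1 \<Longrightarrow> c \<in> I \<Longrightarrow> d \<in> I \<Longrightarrow> module_hom scale scale (C n c d)"
  using C_hom by (cases n) auto

lemma C_add: "n \<ge> 1 \<Longrightarrow> a \<in> I \<Longrightarrow> b \<in> I \<Longrightarrow> C n a b (x + y) = C n a b x + C n a b y"
  using C_hom' module_hom.add by blast
lemma C_scale: "n \<ge> 1 \<Longrightarrow> a \<in> I \<Longrightarrow> b \<in> I \<Longrightarrow> C n a b (scale r x) = scale r (C n a b x)"
  using C_hom' module_hom.scale by blast
lemma C_zero: "n \<ge> 1 \<Longrightarrow> a \<in> I \<Longrightarrow> b \<in> I \<Longrightarrow> C n a b 0 = 0"
  using C_hom' module_hom.zero by blast

lemma sum_delta_I: "(\<And>k. k \<in> I \<Longrightarrow> g k = (if k = b then h else 0)) \<Longrightarrow> b \<in> I \<Longrightarrow> sum g I = h"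
proof -
  assume h: "\<And>k. k \<in> I \<Longrightarrow> g k = (if k = b then h else 0)" and b: "b \<in> I"
  have "sum g I = (\<Sum>k\<in>I. if k = b then h else 0)" by (rule sum.cong) (auto simp: h)
  also have "\<dots> = h" using b Idx_fin by simp
  finally show ?thesis .
qed

lemma comm: "a \<in> I \<Longrightarrow> b \<in> I \<Longrightarrow> c \<in> I \<Longrightarrow> d \<in> I \<Longrightarrow>
  F a b (C (Suc n) c d x) - scale (sg a b c d) (C (Suc n) c d (F a b x)) =
    (if c = b then C (Suc n) a d x else 0) - scale (sg a b c d) (if a = d then C (Suc n) c b x else 0)
  + (if c = -b then C (Suc n) (-a) d x else 0) - scale (sg a b c d) (if -a = d then C (Suc n) c (-b) x else 0)"
proof (induction n arbitrary: c)
  case 0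
  then show ?case using R by simp
next
  case (Suc n)
  note ab = Suc.prems(1,2) and cd = Suc.prems(3,4)
  have na: "-a \<in> I" "-b \<in> I" using ab Idx_neg by auto
  define D where "D = C (Suc n)"
  define CC where "CC = C (Suc (Suc n))"
  have CCe: "\<And>c d x. CC c d x = (\<Sum>k\<in>I. F c k (scale (psign k) (D k d x)))"
    by (simp add: CC_def D_def)
  define \<sigma> where "\<sigma> = sg a b c d"
  define y where "y k = scale (psign k) (D k d x)" for k
  define RI where "RI k = (if k = b then D a d x else 0) - scale (sg a b k d) (if a = d then D k b x else 0)
      + (if k = -b then D (-a) d x else 0) - scale (sg a b k d) (if -a = d then D k (-b) x else 0)" for k
  define RR where "RR k = (if c = b then F a k (y k) else 0) - scale (sg a b c k) (if a = k then F c b (y k) else 0)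
      + (if c = -b then F (-a) k (y k) else 0) - scale (sg a b c k) (if -a = k then F c (-b) (y k) else 0)" for k
  have IH: "\<And>k. k \<in> I \<Longrightarrow> F a b (D k d x) = scale (sg a b k d) (D k d (F a b x)) + RI k"
  proof -
    fix k assume k: "k \<in> I"
    show "F a b (D k d x) = scale (sg a b k d) (D k d (F a b x)) + RI k"
      using Suc.IH[OF ab k cd(2)] unfolding D_def RI_def by (metis add.commute diff_eq_eq)
  qed
  have RRe: "\<And>k. k \<in> I \<Longrightarrow> F a b (F c k (y k)) = scale (sg a b c k) (F c k (F a b (y k))) + RR k"
  proof -
    fix k assume k: "k \<in> I"
    show "F a b (F c k (y k)) = scale (sg a b c k) (F c k (F a b (y k))) + RR k"
      using R[OF ab cd(1) k, of "y k"] unfolding RR_def by (metis add.commute diff_eq_eq)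
  qed
  have sgm: "\<And>k. sg a b c k * (psign k * sg a b k d) = psign k * sg a b c d"
    "\<And>k. sg a b c k * (sg a b k d * psign k) = sg a b c d * psign k"
    by (metis sg_mult mult.commute mult.left_commute)+
  have step: "F a b (F c k (y k)) - scale \<sigma> (F c k (scale (psign k) (D k d (F a b x))))
      = scale (sg a b c k) (F c k (scale (psign k) (RI k))) + RR k" if k: "k \<in> I" for k
  proof -
    have "F a b (F c k (y k)) = scale (sg a b c k) (F c k (scale (psign k) (scale (sg a b k d) (D k d (F a b x)) + RI k))) + RR k"
      using RRe[OF k] IH[OF k] ab cd k by (simp add: y_def F_scale)
    also have "\<dots> = scale \<sigma> (F c k (scale (psign k) (D k d (F a b x)))) + scale (sg a b c k) (F c k (scale (psign k) (RI k))) + RR k"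
      using cd k by (simp add: F_add F_scale scale_right_distrib \<sigma>_def sgm mult.commute[of "psign k"])
    finally show ?thesis by simp
  qed
  have "F a b (CC c d x) - scale \<sigma> (CC c d (F a b x))
     = (\<Sum>k\<in>I. F a b (F c k (y k)) - scale \<sigma> (F c k (scale (psign k) (D k d (F a b x)))))"
    using ab by (simp add: CCe F_sum scale_sum_right sum_subtractf y_def)
  also have "\<dots> = (\<Sum>k\<in>I. scale (sg a b c k) (F c k (scale (psign k) (RI k)))) + (\<Sum>k\<in>I. RR k)"
    by (simp add: step sum.distrib)
  finally have main: "F a b (CC c d x) - scale \<sigma> (CC c d (F a b x)) = 
     (\<Sum>k\<in>I. scale (sg a b c k) (F c k (scale (psign k) (RI k)))) + (\<Sum>k\<in>I. RR k)" .
  have Fif: "\<And>k P X. k \<in> I \<Longrightarrow> F c k (if P then X else 0) = (if P then F c k X else 0)"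
    using cd F_zero by simp
  have S1: "(\<Sum>k\<in>I. scale (sg a b c k) (F c k (scale (psign k) (if k = b then D a d x else 0))))
      = scale (sg a b c b * psign b) (F c b (D a d x))"
    by (rule sum_delta_I[where b=b]) (use ab cd F_zero F_scale in auto)
  have S3: "(\<Sum>k\<in>I. scale (sg a b c k) (F c k (scale (psign k) (if k = -b then D (-a) d x else 0))))
      = scale (sg a b c (-b) * psign (-b)) (F c (-b) (D (-a) d x))"
    by (rule sum_delta_I[where b="-b"]) (use na cd F_zero F_scale in auto)
  have S2: "(\<Sum>k\<in>I. scale (sg a b c k) (F c k (scale (psign k) (scale (sg a b k d) (if a = d then D k b x else 0)))))
      = scale \<sigma> (if a = d then CC c b x else 0)"
  proof (cases "a = d")
    case True
    then show ?thesis using cd by (simp add: CCe scale_sum_right F_scale \<sigma>_def sg_mult3)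
  qed (use cd F_zero in simp)
  have S4: "(\<Sum>k\<in>I. scale (sg a b c k) (F c k (scale (psign k) (scale (sg a b k d) (if -a = d then D k (-b) x else 0)))))
      = scale \<sigma> (if -a = d then CC c (-b) x else 0)"
  proof (cases "-a = d")
    case True
    then show ?thesis using cd by (simp add: CCe scale_sum_right F_scale \<sigma>_def sg_mult3)
  qed (use cd F_zero in simp)
  have T1: "(\<Sum>k\<in>I. (if c = b then F a k (y k) else 0)) = (if c = b then CC a d x else 0)"
    by (simp add: CCe y_def)
  have T3: "(\<Sum>k\<in>I. (if c = -b then F (-a) k (y k) else 0)) = (if c = -b then CC (-a) d x else 0)"
    by (simp add: CCe y_def)
  have T2: "(\<Sum>k\<in>I. scale (sg a b c k) (if a = k then F c b (y k) else 0)) = scale (sg a b c a * psign a) (F c b (D a d x))"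
    by (rule sum_delta_I[where b=a]) (use ab cd F_zero F_scale in \<open>auto simp: y_def\<close>)
  have T4: "(\<Sum>k\<in>I. scale (sg a b c k) (if -a = k then F c (-b) (y k) else 0)) = scale (sg a b c (-a) * psign (-a)) (F c (-b) (D (-a) d x))"
    by (rule sum_delta_I[where b="-a"]) (use na cd F_zero F_scale in \<open>auto simp: y_def\<close>)
  have e1: "(\<Sum>k\<in>I. scale (sg a b c k) (F c k (scale (psign k) (RI k)))) =
     (\<Sum>k\<in>I. scale (sg a b c k) (F c k (scale (psign k) (if k = b then D a d x else 0))))
   - (\<Sum>k\<in>I. scale (sg a b c k) (F c k (scale (psign k) (scale (sg a b k d) (if a = d then D k b x else 0)))))
   + (\<Sum>k\<in>I. scale (sg a b c k) (F c k (scale (psign k) (if k = -b then D (-a) d x else 0))))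
   - (\<Sum>k\<in>I. scale (sg a b c k) (F c k (scale (psign k) (scale (sg a b k d) (if -a = d then D k (-b) x else 0)))))"
    unfolding RI_def sum_subtractf[symmetric] sum.distrib[symmetric]
    by (rule sum.cong) (use cd in \<open>simp_all add: F_add F_diff scale_right_distrib scale_right_diff_distrib del: scale_scale split del: if_split\<close>)
  have e2: "(\<Sum>k\<in>I. RR k) = (\<Sum>k\<in>I. (if c = b then F a k (y k) else 0))
     - (\<Sum>k\<in>I. scale (sg a b c k) (if a = k then F c b (y k) else 0))
     + (\<Sum>k\<in>I. (if c = -b then F (-a) k (y k) else 0))
     - (\<Sum>k\<in>I. scale (sg a b c k) (if -a = k then F c (-b) (y k) else 0))"
    unfolding RR_def sum_subtractf[symmetric] sum.distrib[symmetric] ..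
  have x1: "sg a b c b * psign b = sg a b c a * psign a" by (rule sg_A1)
  have x3: "sg a b c (-b) * psign (-b) = sg a b c (-a) * psign (-a)"
    using ab Idx_nz by (intro sg_A3) auto
  have "F a b (CC c d x) - scale \<sigma> (CC c d (F a b x)) =
    (if c = b then CC a d x else 0) - scale \<sigma> (if a = d then CC c b x else 0)
  + (if c = -b then CC (-a) d x else 0) - scale \<sigma> (if -a = d then CC c (-b) x else 0)"
    unfolding main e1 e2 S1 S2 S3 S4 T1 T2 T3 T4 x1 x3 by (simp add: algebra_simps split del: if_split)
  then show ?case by (simp add: CC_def \<sigma>_def)
qed


lemma sum_neg_I: "sum g I = sum (\<lambda>k. g (-k)) I"
  by (rule sum.reindex_bij_witness[of _ uminus uminus]) (auto simp: Idx_neg)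

lemma sum_odd_zero: fixes g :: "int \<Rightarrow> 'v" assumes "\<And>k. k \<in> I \<Longrightarrow> g (-k) = - g k" shows "sum g I = 0"
proof -
  have "sum g I = sum (\<lambda>k. g (-k)) I" by (rule sum_neg_I)
  also have "\<dots> = sum (\<lambda>k. - g k) I" by (rule sum.cong) (simp_all add: assms)
  also have "\<dots> = - sum g I" by (rule sum_negf)
  finally have e: "sum g I + sum g I = 0" by (simp add: eq_neg_iff_add_eq_0)
  have "sum g I = scale (1/2 + 1/2) (sum g I)" by simp
  also have "\<dots> = scale (1/2) (sum g I + sum g I)" by (simp only: scale_left_distrib scale_right_distrib)
  finally show ?thesis using e by simp
qed

lemma psign_neg: "k \<noteq> 0 \<Longrightarrow> psign (-k) = - psign k"
  by (simp add: psign_def par_def)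

lemma C_sym: "a \<in> I \<Longrightarrow> b \<in> I \<Longrightarrow> C (Suc n) (-a) (-b) x = scale ((-1)^n) (C (Suc n) a b x)"
proof (induction n arbitrary: a x)
  case 0
  then show ?case by (simp add: F_neg)
next
  case (Suc n)
  have "C (Suc (Suc n)) (-a) (-b) x = (\<Sum>k\<in>I. F (-a) k (scale (psign k) (C (Suc n) k (-b) x)))"
    by simp
  also have "\<dots> = (\<Sum>k\<in>I. F (-a) (-k) (scale (psign (-k)) (C (Suc n) (-k) (-b) x)))"
    by (rule sum_neg_I)
  also have "\<dots> = (\<Sum>k\<in>I. scale (- ((-1)^n)) (F a k (scale (psign k) (C (Suc n) k b x))))"
  proof (rule sum.cong[OF refl])
    fix k assume k: "k \<in> I"
    have "F (-a) (-k) = F a k" using F_neg k Suc.prems by blast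
    then show "F (-a) (-k) (scale (psign (-k)) (C (Suc n) (-k) (-b) x)) =
      scale (- ((-1)^n)) (F a k (scale (psign k) (C (Suc n) k b x)))"
      using Suc.IH[OF k Suc.prems(2)] k Suc.prems Idx_nz[OF k]
      by (simp add: psign_neg F_scale F_minus mult.commute)
  qed
  also have "\<dots> = scale ((-1)^Suc n) (C (Suc (Suc n)) a b x)"
    by (simp add: scale_sum_right)
  finally show ?case .
qed

lemma vanish:
  assumes hw: "\<forall>i\<in>I. \<forall>j\<in>I. \<bar>i\<bar> < \<bar>j\<bar> \<longrightarrow> F i j v = 0"
  shows "k \<in> I \<Longrightarrow> j \<in> I \<Longrightarrow> \<bar>k\<bar> < \<bar>j\<bar> \<Longrightarrow> C (Suc n) k j v = 0"
proof (induction n arbitrary: k)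
  case 0
  then show ?case using hw by simp
next
  case (Suc n)
  have "C (Suc (Suc n)) k j v = (\<Sum>l\<in>I. F k l (scale (psign l) (C (Suc n) l j v)))" by simp
  also have "\<dots> = 0"
  proof (rule sum.neutral, rule ballI)
    fix l assume l: "l \<in> I"
    show "F k l (scale (psign l) (C (Suc n) l j v)) = 0"
    proof (cases "\<bar>l\<bar> < \<bar>j\<bar>")
      case True
      then show ?thesis using Suc.IH[OF l Suc.prems(2) True] l Suc.prems F_zero by simp
    next
      case False
      have Fv: "F k l v = 0" using hw l Suc.prems False by auto
      have "F k l (C (Suc n) l j v) = C (Suc n) k j v"
        using comm[OF Suc.prems(1) l l Suc.prems(2), of n v] Fv C_zero[of "Suc n" l j] l Suc.prems
          Idx_nz[OF l] by (auto split: if_splits)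
      then show ?thesis using Suc.IH[OF Suc.prems] l Suc.prems by (simp add: F_scale)
    qed
  qed
  finally show ?case .
qed


lemma main_loc:
  assumes hw: "\<forall>i\<in>I. \<forall>j\<in>I. \<bar>i\<bar> < \<bar>j\<bar> \<longrightarrow> F i j v = 0"
    and wt: "\<forall>i\<in>{1..int N}. F i i v = scale (lam i) v"
    and i: "i \<in> {1..int N}"
  shows "C (Suc (Suc (2*n))) (-i) i v = F (-i) i (C (Suc (2*n)) i i v) - scale (lam i) (C (Suc (2*n)) (-i) i v)"
proof -
  have iI: "i \<in> I" "-i \<in> I" "i > 0" using i by (auto simp: Idx_def)
  define D where "D = C (Suc (2*n))"
  define g where "g k = (if i < \<bar>k\<bar> then scale (psign k) (D (-i) i v) else 0)" for k
  define h where "h k = (if i < \<bar>k\<bar> then scale (psign k) (D k (-k) v) else 0)" for k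
  have pi: "psign i = 1" "psign (-i) = -1" using iI by (auto simp: psign_def par_def)
  have tm: "F (-i) k (scale (psign k) (D k i v)) = (if k = i then F (-i) i (D i i v) else 0)
     - (if k = -i then scale (lam i) (D (-i) i v) else 0) + (g k - h k)" if k: "k \<in> I" for k
  proof -
    consider "k = i" | "k = -i" | "\<bar>k\<bar> < i" | "\<bar>k\<bar> > i" by linarith
    then show ?thesis
    proof cases
      case 1
      then show ?thesis using iI pi by (simp add: g_def h_def)
    next
      case 2
      have s: "sg i i (-i) i = 1" using iI by (simp add: sg_def par_def)
      have Fv: "F i i v = scale (lam i) v" using wt i by blast
      have "F i i (D (-i) i v) = scale (lam i) (D (-i) i v)"
        using comm[OF iI(1) iI(1) iI(2) iI(1), of "2*n" v] s Fv iI C_scale[of "Suc (2*n)" "-i" i]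
        unfolding D_def by simp
      moreover have "F (-i) (-i) = F i i" using F_neg iI by blast
      ultimately show ?thesis using 2 iI pi by (simp add: g_def h_def F_minus)
    next
      case 3
      then have "D k i v = 0" using vanish[OF hw k iI(1)] iI unfolding D_def by simp
      moreover have "k \<noteq> i" "k \<noteq> -i" using 3 by auto
      ultimately show ?thesis using 3 k iI F_zero by (simp add: g_def h_def)
    next
      case 4
      have s: "sg (-i) k k i = 1" using iI by (simp add: sg_def par_def)
      have Fv: "F (-i) k v = 0" using hw iI k 4 by auto
      have "F (-i) k (D k i v) = D (-i) i v - D k (-k) v"
        using comm[OF iI(2) k k iI(1), of "2*n" v] s Fv iI k C_zero[of "Suc (2*n)" k i] Idx_nz[OF k]
        unfolding D_def by simp
      moreover have "k \<noteq> i" "k \<noteq> -i" using 4 iI(3) by auto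
      ultimately show ?thesis using 4 k iI by (simp add: g_def h_def F_scale scale_right_diff_distrib)
    qed
  qed
  have godd: "\<And>k. k \<in> I \<Longrightarrow> g (-k) = - g k" using Idx_nz by (simp add: g_def psign_neg)
  have hodd: "\<And>k. k \<in> I \<Longrightarrow> h (-k) = - h k"
  proof -
    fix k assume k: "k \<in> I"
    have "D (-k) (-(-k)) v = D k (-k) v"
      using C_sym[OF k Idx_neg[OF k], of "2*n" v] unfolding D_def by simp
    then show "h (-k) = - h k" using Idx_nz[OF k] by (simp add: h_def psign_neg)
  qed
  have "C (Suc (Suc (2*n))) (-i) i v = (\<Sum>k\<in>I. F (-i) k (scale (psign k) (D k i v)))"
    by (simp add: D_def)
  also have "\<dots> = (\<Sum>k\<in>I. (if k = i then F (-i) i (D i i v) else 0))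
     - (\<Sum>k\<in>I. (if k = -i then scale (lam i) (D (-i) i v) else 0)) + (sum g I - sum h I)"
    by (simp add: tm sum.distrib sum_subtractf)
  also have "\<dots> = F (-i) i (D i i v) - scale (lam i) (D (-i) i v)"
    using sum_odd_zero[of g, OF godd] sum_odd_zero[of h, OF hodd] iI Idx_fin by simp
  finally show ?thesis by (simp add: D_def)
qed

end

theorem mainTheorem8:
  fixes N :: nat and scale :: "complex \<Rightarrow> 'v::ab_group_add \<Rightarrow> 'v"
    and F :: "int \<Rightarrow> int \<Rightarrow> 'v \<Rightarrow> 'v" and v :: 'v and lam :: "int \<Rightarrow> complex"
  assumes "N \<ge> 1"
    and rep: "is_qrep N scale F"
    and hw: "\<forall>i\<in>Idx N. \<forall>j\<in>Idx N. \<bar>i\<bar> < \<bar>j\<bar> \<longrightarrow> F i j v = 0"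
    and wt: "\<forall>i\<in>{1..int N}. F i i v = scale (lam i) v"
    and m: "m \<ge> (1::nat)"
    and i: "i \<in> {1..int N}"
  shows "Cop N scale F (2*m) (-i) i v
         = F (-i) i (Cop N scale F (2*m - 1) i i v) - scale (lam i) (Cop N scale F (2*m - 1) (-i) i v)"
proof -
  interpret Q N scale F by unfold_locales (rule rep)
  obtain n where n: "m = Suc n" using m by (cases m) auto
  have e: "2*m = Suc (Suc (2*n))" "2*m - 1 = Suc (2*n)" using n by auto
  show ?thesis unfolding e(2) unfolding e(1) by (rule main_loc[OF hw wt i])
qed

end
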